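(* Consider the problem $\min f(x)$ subject to $x\in\mathcal{F}\cap\mathcal{Z}\cap X$, where $\mathcal{F}=\{x: g(x)\le0\}$, and suppose the extended Mangasarian–Fromovitz condition (EMFCQ, see context) holds. Then there is $\varepsilon^\star>0$ such that for every $\varepsilon\in(0,\varepsilon^\star]$ the penalty function $P(x;\varepsilon)=f(x)+\frac1\varepsilon\sum_{i=1}^m\max\{0,g_i(x)\}$ has no Clarke stationary points (for the problem $\min\{P(x;\varepsilon): x\in X\cap\mathcal{Z}\}$) in $(X\cap\mathcal{Z})\setminus\mathcal{F}$.
   Context: $\{1,\dots,n\}=I^c\cup I^z$, $I^c\cap I^z=\emptyset$; $v_c=(v_i)_{i\in I^c}$, $v_z=(v_i)_{i\in I^z}$. $l,u\in\mathbb{R}^n$ finite, $l_i<u_i$, $l_i,u_i\in\mathbb{Z}$ for $i\in I^z$; $X=\{x:l\le x\le u\}$, $\mathcal{Z}=\{x: x_i\in\mathbb{Z}\ \forall i\in I^z\}$. $f:\mathbb{R}^n\to\mathbb{R}$ and $g=(g_1,\dots,g_m):\mathbb{R}^n\to\mathbb{R}^m$ are Lipschitz continuous w.r.t. the continuous variables: there is $L>0$ with $|h(x)-h(y)|\le L\|x-y\|$ for $h\in\{f,g_1,\dots,g_m\}$ whenever $x_z=y_z$. A vector in $\mathbb{Z}^p$ is primitive if the gcd of its components is 1. For $x\in X\cap\mathcal{Z}$: $D^z(x)=\{d\in\mathbb{Z}^n: d_i=0\ (i\in I^c),\ d_z\text{ primitive},\ x+d\in X\cap\mathcal{Z}\}$,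 $\mathcal{B}^z(x)=\{x+d: d\in D^z(x)\}$, $D^c(x)=\{s: s_i=0\ (i\in I^z),\ s_i\ge0 \text{ if } i\in I^c,x_i=l_i,\ s_i\le0\text{ if } i\in I^c,x_i=u_i\}$. For $h$ Lipschitz w.r.t. continuous variables and $s$ with $s_z=0$: $h^{Cl}_{x_c}(x;s)=\limsup_{y_c\to x_c,\,y_z=x_z,\,t\downarrow0}\frac{h(y+ts)-h(y)}{t}$, and $\partial_c h(x)=\{v\in\mathbb{R}^n: v_z=0,\ h^{Cl}_{x_c}(x;s)\ge s^\top v\ \forall s \text{ with } s_z=0\}$. A point $x\in X\cap\mathcal{Z}$ is a Clarke stationary point of $\min\{P(\cdot;\varepsilon):X\cap\mathcal{Z}\}$ if $P^{Cl}_{x_c}(x;s)\ge0$ for all $s\in D^c(x)$ and $P(x;\varepsilon)\le P(y;\varepsilon)$ for all $y\in\mathcal{B}^z(x)$. EMFCQ: for every $x\in(X\cap\mathcal{Z})\setminus\operatorname{int}\mathcal{F}$, either (i) there is $s\in D^c(x)$ with $\xi^\top s<0$ for all $\xi\in\partial_c g_i(x)$ and all $i$ with $g_i(x)\ge0$; or (ii) there is $\bar d\in D^z(x)$ with $\sum_{i=1}^m\max\{0,g_i(x+\bar d)\}<\sum_{i=1}^m\max\{0,g_i(x)\}$. *)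

theory Defs
  imports "HOL-Analysis.Analysis"
begin

text \<open>Index set of coordinates: the finite type 'n (playing the role of {1,..,n});
  the integer coordinates are Iz, the continuous ones are the complement UNIV - Iz.\<close>

definition boxX :: "real^'n \<Rightarrow> real^'n \<Rightarrow> (real^'n) set" where
  "boxX l u = {x. \<forall>i. l$i \<le> x$i \<and> x$i \<le> u$i}"

definition Zset :: "'n set \<Rightarrow> (real^'n) set" where
  "Zset Iz = {x. \<forall>i\<in>Iz. x$i \<in> \<int>}"

definition primitive_on :: "'n set \<Rightarrow> real^'n \<Rightarrow> bool" where
  "primitive_on Iz d \<longleftrightarrow> Gcd ((\<lambda>i. \<lfloor>d$i\<rfloor>) ` Iz) = (1::int)"

definition Dz :: "'n set \<Rightarrow> real^'n \<Rightarrow> real^'n \<Rightarrow> real^'n \<Rightarrow> (real^'n) set" where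
  "Dz Iz l u x = {d. (\<forall>i. d$i \<in> \<int>) \<and> (\<forall>i. i \<notin> Iz \<longrightarrow> d$i = 0) \<and>
      primitive_on Iz d \<and> x + d \<in> boxX l u \<inter> Zset Iz}"

definition Bz :: "'n set \<Rightarrow> real^'n \<Rightarrow> real^'n \<Rightarrow> real^'n \<Rightarrow> (real^'n) set" where
  "Bz Iz l u x = (\<lambda>d. x + d) ` Dz Iz l u x"

definition Dc :: "'n set \<Rightarrow> real^'n \<Rightarrow> real^'n \<Rightarrow> real^'n \<Rightarrow> (real^'n) set" where
  "Dc Iz l u x = {s. (\<forall>i\<in>Iz. s$i = 0) \<and>
      (\<forall>i. i \<notin> Iz \<and> x$i = l$i \<longrightarrow> s$i \<ge> 0) \<and>
      (\<forall>i. i \<notin> Iz \<and> x$i = u$i \<longrightarrow> s$i \<le> 0)}"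

definition clarke_c :: "'n set \<Rightarrow> (real^'n \<Rightarrow> real) \<Rightarrow> real^'n \<Rightarrow> real^'n \<Rightarrow> ereal" where
  "clarke_c Iz h x s =
     Limsup ((inf (nhds x) (principal {y. \<forall>i\<in>Iz. y$i = x$i})) \<times>\<^sub>F at_right 0)
       (\<lambda>(y, t). ereal ((h (y + t *\<^sub>R s) - h y) / t))"

definition clarke_subdiff_c :: "'n set \<Rightarrow> (real^'n \<Rightarrow> real) \<Rightarrow> real^'n \<Rightarrow> (real^'n) set" where
  "clarke_subdiff_c Iz h x = {v. (\<forall>i\<in>Iz. v$i = 0) \<and>
      (\<forall>s. (\<forall>i\<in>Iz. s$i = 0) \<longrightarrow> clarke_c Iz h x s \<ge> ereal (s \<bullet> v))}"

definition lipschitz_c :: "'n set \<Rightarrow> real \<Rightarrow> (real^'n \<Rightarrow> real) \<Rightarrow> bool" where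
  "lipschitz_c Iz L h \<longleftrightarrow>
     (\<forall>x y. (\<forall>i\<in>Iz. x$i = y$i) \<longrightarrow> \<bar>h x - h y\<bar> \<le> L * norm (x - y))"

definition feasF :: "nat \<Rightarrow> (nat \<Rightarrow> real^'n \<Rightarrow> real) \<Rightarrow> (real^'n) set" where
  "feasF m g = {x. \<forall>i<m. g i x \<le> 0}"

definition viol :: "nat \<Rightarrow> (nat \<Rightarrow> real^'n \<Rightarrow> real) \<Rightarrow> real^'n \<Rightarrow> real" where
  "viol m g x = (\<Sum>i<m. max 0 (g i x))"

definition penalty :: "(real^'n \<Rightarrow> real) \<Rightarrow> nat \<Rightarrow> (nat \<Rightarrow> real^'n \<Rightarrow> real) \<Rightarrow> real \<Rightarrow> real^'n \<Rightarrow> real" where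
  "penalty f m g \<epsilon> x = f x + (1 / \<epsilon>) * viol m g x"

definition clarke_stationary ::
  "'n set \<Rightarrow> real^'n \<Rightarrow> real^'n \<Rightarrow> (real^'n \<Rightarrow> real) \<Rightarrow> real^'n \<Rightarrow> bool" where
  "clarke_stationary Iz l u P x \<longleftrightarrow>
     x \<in> boxX l u \<inter> Zset Iz \<and>
     (\<forall>s\<in>Dc Iz l u x. clarke_c Iz P x s \<ge> 0) \<and>
     (\<forall>y\<in>Bz Iz l u x. P x \<le> P y)"

definition EMFCQ ::
  "'n set \<Rightarrow> real^'n \<Rightarrow> real^'n \<Rightarrow> nat \<Rightarrow> (nat \<Rightarrow> real^'n \<Rightarrow> real) \<Rightarrow> bool" where
  "EMFCQ Iz l u m g \<longleftrightarrow>
     (\<forall>x\<in>(boxX l u \<inter> Zset Iz) - interior (feasF m g).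
        (\<exists>s\<in>Dc Iz l u x. \<forall>i<m. g i x \<ge> 0 \<longrightarrow>
             (\<forall>\<xi>\<in>clarke_subdiff_c Iz (g i) x. \<xi> \<bullet> s < 0)) \<or>
        (\<exists>d\<in>Dz Iz l u x. viol m g (x + d) < viol m g x))"

end

theory Submission
  imports Defs
begin


lemma ev_to_r:
  assumes "eventually P (inf (nhds x) (principal S) \<times>\<^sub>F at_right (0::real))"
  shows "\<exists>r>0. \<forall>y t. y \<in> S \<and> dist y x < r \<and> 0 < t \<and> t < r \<longrightarrow> P (y,t)"
proof -
  from assms obtain Pf Pg where pf: "eventually Pf (inf (nhds x) (principal S))"
    and pg: "eventually Pg (at_right (0::real))" and pp: "\<forall>y t. Pf y \<longrightarrow> Pg t \<longrightarrow> P (y,t)"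
    unfolding eventually_prod_filter by blast
  from pf obtain d where d: "d>0" "\<forall>y. dist y x < d \<longrightarrow> y \<in> S \<longrightarrow> Pf y"
    unfolding eventually_inf_principal eventually_nhds_metric by blast
  from pg obtain b where b: "b>0" "\<forall>t>0. t < b \<longrightarrow> Pg t"
    unfolding eventually_at_right[OF zero_less_one] by blast
  show ?thesis using d b pp by (intro exI[of _ "min d b"]) auto
qed

lemma r_to_ev:
  assumes "r>0" "\<forall>y t. y \<in> S \<and> dist y x < r \<and> 0 < t \<and> t < r \<longrightarrow> P (y,t)"
  shows "eventually P (inf (nhds x) (principal S) \<times>\<^sub>F at_right (0::real))"
  unfolding eventually_prod_filter
proof (intro exI conjI)
  show "eventually (\<lambda>y. y \<in> S \<and> dist y x < r) (inf (nhds x) (principal S))"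
    unfolding eventually_inf_principal eventually_nhds_metric using assms(1) by blast
  show "eventually (\<lambda>t. 0 < t \<and> t < r) (at_right (0::real))"
    unfolding eventually_at_right[OF zero_less_one] using assms(1) by blast
  show "\<forall>y t. y \<in> S \<and> dist y x < r \<longrightarrow> 0 < t \<and> t < r \<longrightarrow> P (y, t)" using assms(2) by blast
qed

definition sl :: "'n set \<Rightarrow> real^'n \<Rightarrow> (real^'n) set" where
  "sl Iz x = {y. \<forall>i\<in>Iz. y$i = x$i}"

lemma clarke_U:
  assumes "clarke_c Iz h x s < ereal c"
  shows "\<exists>r>0. \<forall>y t. y \<in> sl Iz x \<and> dist y x < r \<and> 0 < t \<and> t < r \<longrightarrow> (h (y + t *\<^sub>R s) - h y) / t < c"
proof -
  have "eventually (\<lambda>(y,t). ereal ((h (y + t *\<^sub>R s) - h y) / t) < ereal c)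
     (inf (nhds x) (principal {y. \<forall>i\<in>Iz. y$i = x$i}) \<times>\<^sub>F at_right 0)"
    using Limsup_lessD[OF assms[unfolded clarke_c_def]] by (simp add: case_prod_unfold)
  from ev_to_r[OF this] show ?thesis unfolding sl_def by auto
qed

lemma clarke_L:
  assumes "r>0" "\<forall>y t. y \<in> sl Iz x \<and> dist y x < r \<and> 0 < t \<and> t < r \<longrightarrow> (h (y + t *\<^sub>R s) - h y) / t \<le> c"
  shows "clarke_c Iz h x s \<le> ereal c"
  unfolding clarke_c_def
  apply (rule Limsup_bounded)
  using r_to_ev[OF assms(1), of "{y. \<forall>i\<in>Iz. y$i = x$i}" x "\<lambda>(y,t). ereal ((h (y + t *\<^sub>R s) - h y) / t) \<le> ereal c"]
    assms(2) unfolding sl_def by (auto simp: case_prod_unfold)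

definition pc :: "'n set \<Rightarrow> (real^'n \<Rightarrow> real) \<Rightarrow> real^'n \<Rightarrow> real^'n \<Rightarrow> real" where
  "pc Iz h x s = real_of_ereal (clarke_c Iz h x s)"

lemma q_bound:
  assumes "lipschitz_c Iz L h" "\<forall>i\<in>Iz. s$i = 0" "t > 0"
  shows "\<bar>(h (y + t *\<^sub>R s) - h y) / t\<bar> \<le> L * norm s"
proof -
  have "\<forall>i\<in>Iz. (y + t *\<^sub>R s)$i = y$i" using assms(2) by simp
  hence "\<bar>h (y + t *\<^sub>R s) - h y\<bar> \<le> L * norm (y + t *\<^sub>R s - y)"
    using assms(1) unfolding lipschitz_c_def by blast
  also have "\<dots> = t * (L * norm s)" using assms(3) by simp
  finally show ?thesis using assms(3) by (simp add: divide_le_eq abs_divide mult.commute)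
qed

lemma clarke_fin:
  assumes "lipschitz_c Iz L h" "\<forall>i\<in>Iz. s$i = 0"
  shows "clarke_c Iz h x s = ereal (pc Iz h x s)" "\<bar>pc Iz h x s\<bar> \<le> L * norm s"
proof -
  have up: "clarke_c Iz h x s \<le> ereal (L * norm s)"
  proof (rule clarke_L[of 1], simp, intro allI impI, elim conjE)
    fix y :: "real^'a" and t :: real assume "0 < t"
    from q_bound[OF assms this, of y] show "(h (y + t *\<^sub>R s) - h y) / t \<le> L * norm s"
      by (rule abs_le_D1)
  qed
  have lo: "ereal (- (L * norm s)) \<le> clarke_c Iz h x s"
  proof (rule ccontr)
    assume "\<not> ?thesis"
    hence "clarke_c Iz h x s < ereal (- (L * norm s))" by simp
    from clarke_U[OF this] obtain r where r: "r>0"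
      "\<forall>y t. y \<in> sl Iz x \<and> dist y x < r \<and> 0 < t \<and> t < r \<longrightarrow> (h (y + t *\<^sub>R s) - h y) / t < - (L * norm s)"
      by blast
    have "x \<in> sl Iz x" "dist x x < r" "0 < r/2" "r/2 < r" using r(1) by (auto simp: sl_def)
    hence "(h (x + (r/2) *\<^sub>R s) - h x) / (r/2) < - (L * norm s)"
      using r(2) by blast
    moreover have "\<bar>(h (x + (r/2) *\<^sub>R s) - h x) / (r/2)\<bar> \<le> L * norm s"
      using q_bound[OF assms, of "r/2" x] r(1) by simp
    ultimately show False by linarith
  qed
  from up lo show "clarke_c Iz h x s = ereal (pc Iz h x s)" unfolding pc_def
    by (cases "clarke_c Iz h x s") auto
  with up lo show "\<bar>pc Iz h x s\<bar> \<le> L * norm s" by auto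
qed

lemma real_le_eps: assumes "\<And>e. e > 0 \<Longrightarrow> (a::real) \<le> b + 2 * e" shows "a \<le> b"
proof (rule field_le_epsilon)
  fix e :: real assume "e > 0"
  hence "a \<le> b + 2 * (e/2)" by (intro assms) simp
  thus "a \<le> b + e" by simp
qed

lemma pc_subadd:
  assumes h: "lipschitz_c Iz L h" and a: "\<forall>i\<in>Iz. a$i = 0" and b: "\<forall>i\<in>Iz. b$i = 0"
  shows "pc Iz h x (a + b) \<le> pc Iz h x a + pc Iz h x b"
proof -
  have ab: "\<forall>i\<in>Iz. (a+b)$i = 0" using a b by simp
  show ?thesis
  proof (rule real_le_eps)
    fix e :: real assume e: "e > 0"
    have "clarke_c Iz h x a < ereal (pc Iz h x a + e)" using clarke_fin(1)[OF h a] e by simp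
    from clarke_U[OF this] obtain r1 where r1: "r1>0"
      "\<forall>y t. y \<in> sl Iz x \<and> dist y x < r1 \<and> 0 < t \<and> t < r1 \<longrightarrow> (h (y + t *\<^sub>R a) - h y) / t < pc Iz h x a + e"
      by blast
    have "clarke_c Iz h x b < ereal (pc Iz h x b + e)" using clarke_fin(1)[OF h b] e by simp
    from clarke_U[OF this] obtain r2 where r2: "r2>0"
      "\<forall>y t. y \<in> sl Iz x \<and> dist y x < r2 \<and> 0 < t \<and> t < r2 \<longrightarrow> (h (y + t *\<^sub>R b) - h y) / t < pc Iz h x b + e"
      by blast
    define r where "r = min r2 (r1 / (1 + norm b))"
    have r: "r > 0" using r1 r2 by (simp add: r_def add_pos_nonneg)
    have "clarke_c Iz h x (a+b) \<le> ereal (pc Iz h x a + pc Iz h x b + 2*e)"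
    proof (rule clarke_L[OF r], intro allI impI, elim conjE)
      fix y t assume y: "y \<in> sl Iz x" "dist y x < r" "0 < t" "t < r"
      have yb: "y + t *\<^sub>R b \<in> sl Iz x" using y(1) b by (simp add: sl_def)
      have "dist (y + t *\<^sub>R b) x \<le> dist (y + t *\<^sub>R b) y + dist y x" by (rule dist_triangle)
      also have "dist (y + t *\<^sub>R b) y = t * norm b" using y(3) by (simp add: dist_norm)
      finally have "dist (y + t *\<^sub>R b) x \<le> dist y x + t * norm b" by simp
      also have "\<dots> < r + r * norm b" using y by (intro add_less_le_mono mult_right_mono) auto
      also have "\<dots> = r * (1 + norm b)" by (simp add: algebra_simps)
      also have "\<dots> \<le> r1"
      proof -
        have "r \<le> r1 / (1 + norm b)" unfolding r_def by simp
        thus ?thesis by (simp add: le_divide_eq add_pos_nonneg)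
      qed
      finally have d1: "dist (y + t *\<^sub>R b) x < r1" .
      have "r1 / (1 + norm b) \<le> r1" using r1(1) by (simp add: divide_le_eq add_pos_nonneg)
      hence tr1: "t < r1" using y(4) unfolding r_def by linarith
      have q1: "(h (y + t *\<^sub>R b + t *\<^sub>R a) - h (y + t *\<^sub>R b)) / t < pc Iz h x a + e"
        using r1(2) yb d1 y(3) tr1 by blast
      have q2: "(h (y + t *\<^sub>R b) - h y) / t < pc Iz h x b + e"
        using r2(2) y unfolding r_def by auto
      have "(h (y + t *\<^sub>R (a + b)) - h y) / t =
         (h (y + t *\<^sub>R b + t *\<^sub>R a) - h (y + t *\<^sub>R b)) / t + (h (y + t *\<^sub>R b) - h y) / t"
        by (simp add: scaleR_right_distrib add_divide_distrib[symmetric] algebra_simps)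
      with q1 q2 show "(h (y + t *\<^sub>R (a + b)) - h y) / t \<le> pc Iz h x a + pc Iz h x b + 2 * e"
        by linarith
    qed
    hence "pc Iz h x (a+b) \<le> pc Iz h x a + pc Iz h x b + 2*e"
      using clarke_fin(1)[OF h ab] by simp
    thus "pc Iz h x (a+b) \<le> pc Iz h x a + pc Iz h x b + 2 * e" by simp
  qed
qed



lemma pc_hom:
  assumes h: "lipschitz_c Iz L h" and a: "\<forall>i\<in>Iz. a$i = 0" and c: "c > 0"
  shows "pc Iz h x (c *\<^sub>R a) \<le> c * pc Iz h x a"
proof (rule real_le_eps)
  fix e :: real assume e: "e > 0"
  have ca: "\<forall>i\<in>Iz. (c *\<^sub>R a)$i = 0" using a by simp
  have "clarke_c Iz h x a < ereal (pc Iz h x a + e / c)" using clarke_fin(1)[OF h a] e c by simp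
  from clarke_U[OF this] obtain r where r: "r>0"
    "\<forall>y t. y \<in> sl Iz x \<and> dist y x < r \<and> 0 < t \<and> t < r \<longrightarrow> (h (y + t *\<^sub>R a) - h y) / t < pc Iz h x a + e / c"
    by blast
  define r' where "r' = min r (r / c)"
  have r': "r' > 0" using r c by (simp add: r'_def)
  have "clarke_c Iz h x (c *\<^sub>R a) \<le> ereal (c * pc Iz h x a + e)"
  proof (rule clarke_L[OF r'], intro allI impI, elim conjE)
    fix y t assume y: "y \<in> sl Iz x" "dist y x < r'" "0 < t" "t < r'"
    have "c * t < r" using y(4) c unfolding r'_def by (simp add: less_divide_eq mult.commute)
    moreover have "dist y x < r" using y(2) unfolding r'_def by simp
    moreover have "0 < c * t" using c y(3) by simp
    ultimately have q: "(h (y + (c * t) *\<^sub>R a) - h y) / (c * t) < pc Iz h x a + e / c"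
      using r(2) y(1) by blast
    have "(h (y + t *\<^sub>R (c *\<^sub>R a)) - h y) / t = c * ((h (y + (c * t) *\<^sub>R a) - h y) / (c * t))"
      using c y(3) by (simp add: mult.commute)
    also have "\<dots> \<le> c * (pc Iz h x a + e / c)" using q c by (intro mult_left_mono) auto
    also have "\<dots> = c * pc Iz h x a + e" using c by (simp add: algebra_simps)
    finally show "(h (y + t *\<^sub>R (c *\<^sub>R a)) - h y) / t \<le> c * pc Iz h x a + e" .
  qed
  hence "pc Iz h x (c *\<^sub>R a) \<le> c * pc Iz h x a + e" using clarke_fin(1)[OF h ca] by simp
  thus "pc Iz h x (c *\<^sub>R a) \<le> c * pc Iz h x a + 2 * e" using e by simp
qed

lemma HB:
  fixes p :: "real^'n \<Rightarrow> real"
  assumes sub: "\<And>a b. p (a+b) \<le> p a + p b"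
    and hom: "\<And>c a. c > 0 \<Longrightarrow> p (c *\<^sub>R a) \<le> c * p a"
    and p0: "p 0 = 0"
  shows "\<exists>v. (\<forall>s. v \<bullet> s \<le> p s) \<and> p s0 \<le> v \<bullet> s0"
proof -
  have hom': "p (c *\<^sub>R a) \<le> c * p a" if "c \<ge> 0" for c a
    using hom[of c a] p0 that by (cases "c = 0") auto
  have homr: "c * p a \<le> p (c *\<^sub>R a)" if "c > 0" for c a
  proof -
    have "p a = p ((1/c) *\<^sub>R (c *\<^sub>R a))" using that by simp
    also have "\<dots> \<le> (1/c) * p (c *\<^sub>R a)" using hom[of "1/c" "c *\<^sub>R a"] that by simp
    finally show ?thesis using that by (simp add: field_simps)
  qed
  define E where "E = {z :: (real^'n) \<times> real. snd z > p (fst z)}"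
  define R where "R = (\<lambda>c. (c *\<^sub>R s0, c * p s0)) ` {0::real..}"
  have cE: "convex E"
    unfolding convex_def E_def
  proof (intro ballI allI impI)
    fix z1 z2 :: "(real^'n) \<times> real" and u v :: real
    assume z: "z1 \<in> {z. p (fst z) < snd z}" "z2 \<in> {z. p (fst z) < snd z}" and uv: "0 \<le> u" "0 \<le> v" "u + v = 1"
    have "p (u *\<^sub>R fst z1 + v *\<^sub>R fst z2) \<le> u * p (fst z1) + v * p (fst z2)"
      using sub[of "u *\<^sub>R fst z1" "v *\<^sub>R fst z2"] hom'[OF uv(1), of "fst z1"] hom'[OF uv(2), of "fst z2"] by linarith
    also have "\<dots> < u * snd z1 + v * snd z2"
    proof (cases "u = 0")
      case True thus ?thesis using uv z by simp
    next
      case False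
      hence "u * p (fst z1) < u * snd z1" using uv z by simp
      moreover have "v * p (fst z2) \<le> v * snd z2" using uv z by (simp add: mult_left_mono)
      ultimately show ?thesis by simp
    qed
    finally show "u *\<^sub>R z1 + v *\<^sub>R z2 \<in> {z. p (fst z) < snd z}" by simp
  qed
  have cR: "convex R"
    unfolding convex_def R_def
  proof (intro ballI allI impI)
    fix z1 z2 :: "(real^'n) \<times> real" and u v :: real
    assume z: "z1 \<in> (\<lambda>c. (c *\<^sub>R s0, c * p s0)) ` {0..}" "z2 \<in> (\<lambda>c. (c *\<^sub>R s0, c * p s0)) ` {0..}"
      and uv: "0 \<le> u" "0 \<le> v" "u + v = 1"
    from z obtain c1 c2 where c: "c1 \<ge> 0" "c2 \<ge> 0" "z1 = (c1 *\<^sub>R s0, c1 * p s0)" "z2 = (c2 *\<^sub>R s0, c2 * p s0)"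
      by auto
    have "u *\<^sub>R z1 + v *\<^sub>R z2 = (\<lambda>c. (c *\<^sub>R s0, c * p s0)) (u * c1 + v * c2)"
      using c by (simp add: algebra_simps)
    moreover have "u * c1 + v * c2 \<ge> 0" using c uv by simp
    ultimately show "u *\<^sub>R z1 + v *\<^sub>R z2 \<in> (\<lambda>c. (c *\<^sub>R s0, c * p s0)) ` {0..}" by blast
  qed
  have nE: "E \<noteq> {}" unfolding E_def using p0 by (intro ex_in_conv[THEN iffD1] exI[of _ "(0,1)"]) auto
  have nR: "R \<noteq> {}" unfolding R_def by auto
  have dis: "E \<inter> R = {}"
  proof -
    { fix c :: real assume c: "c \<ge> 0" and "c * p s0 > p (c *\<^sub>R s0)"
      hence False using homr[of c s0] p0 by (cases "c = 0") auto }
    thus ?thesis unfolding E_def R_def by auto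
  qed
  from separating_hyperplane_sets[OF cE cR nE nR dis] obtain w b where
    w: "w \<noteq> 0" "\<forall>z\<in>E. w \<bullet> z \<le> b" "\<forall>z\<in>R. b \<le> w \<bullet> z" by blast
  obtain a \<alpha> where wa: "w = (a, \<alpha>)" by (cases w)
  have ip: "w \<bullet> (s, \<tau>) = a \<bullet> s + \<alpha> * \<tau>" for s \<tau> unfolding wa by (simp add: inner_Pair)
  have memE: "(s, \<tau>) \<in> E \<longleftrightarrow> p s < \<tau>" for s \<tau> unfolding E_def by simp
  have one: "a \<bullet> s + \<alpha> * \<tau> \<le> 0" if "p s < \<tau>" for s \<tau>
  proof (rule ccontr)
    assume q: "\<not> ?thesis"
    define lam where "lam = (\<bar>b\<bar> + 1) / (a \<bullet> s + \<alpha> * \<tau>)"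
    have lp: "lam > 0" using q unfolding lam_def by simp
    have "lam * p s < lam * \<tau>" using that lp by simp
    hence "p (lam *\<^sub>R s) < lam * \<tau>" using hom[OF lp, of s] by linarith
    hence "w \<bullet> (lam *\<^sub>R s, lam * \<tau>) \<le> b" using w(2) memE by blast
    hence "lam * (a \<bullet> s + \<alpha> * \<tau>) \<le> b" unfolding ip by (simp add: algebra_simps)
    moreover have "lam * (a \<bullet> s + \<alpha> * \<tau>) = \<bar>b\<bar> + 1" using q unfolding lam_def by simp
    ultimately show False by simp
  qed
  have al: "\<alpha> < 0"
  proof -
    have "\<alpha> \<le> 0" using one[of 0 1] p0 by simp
    moreover have "\<alpha> \<noteq> 0"
    proof
      assume "\<alpha> = 0"
      hence "a \<bullet> a \<le> 0" using one[of a "p a + 1"] by simp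
      hence "a = 0" by (metis inner_gt_zero_iff not_le)
      with \<open>\<alpha> = 0\<close> wa w(1) show False by (simp add: zero_prod_def)
    qed
    ultimately show ?thesis by simp
  qed
  define v where "v = (-1/\<alpha>) *\<^sub>R a"
  have vs: "v \<bullet> s = (a \<bullet> s) / (-\<alpha>)" for s unfolding v_def by simp
  have b0: "b \<ge> 0"
  proof (rule ccontr)
    assume "\<not> b \<ge> 0"
    hence bn: "b < 0" by simp
    define e where "e = b / (2 * \<alpha>)"
    have e: "e > 0" using bn al unfolding e_def by (simp add: divide_neg_neg)
    have "w \<bullet> (0, e) \<le> b" using w(2) memE[of 0 e] p0 e by simp
    hence "\<alpha> * e \<le> b" unfolding ip by simp
    moreover have "\<alpha> * e = b / 2" using al unfolding e_def by simp
    ultimately show False using bn by simp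
  qed
  have "(s0, p s0) \<in> R" unfolding R_def by (intro image_eqI[of _ _ 1]) auto
  hence "b \<le> a \<bullet> s0 + \<alpha> * p s0" using w(3) ip by auto
  hence "p s0 * (-\<alpha>) \<le> a \<bullet> s0" using b0 by (simp add: algebra_simps)
  hence "p s0 \<le> (a \<bullet> s0) / (-\<alpha>)" by (subst pos_le_divide_eq) (use al in auto)
  hence "p s0 \<le> v \<bullet> s0" unfolding vs .
  moreover have "v \<bullet> s \<le> p s" for s
  proof (rule real_le_eps)
    fix e :: real assume e: "e > 0"
    have "a \<bullet> s + \<alpha> * (p s + e) \<le> 0" using one[of s "p s + e"] e by simp
    hence "a \<bullet> s \<le> (p s + e) * (-\<alpha>)" by (simp add: algebra_simps)
    hence "(a \<bullet> s) / (-\<alpha>) \<le> p s + e" by (subst pos_divide_le_eq) (use al in auto)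
    thus "v \<bullet> s \<le> p s + 2 * e" unfolding vs using e by linarith
  qed
  ultimately show ?thesis by blast
qed



lemma emfcq_neg:
  assumes h: "lipschitz_c Iz L h" and s0: "\<forall>i\<in>Iz. s0$i = 0"
    and sd: "\<forall>\<xi>\<in>clarke_subdiff_c Iz h x. \<xi> \<bullet> s0 < 0"
  shows "pc Iz h x s0 < 0"
proof -
  define pr :: "real^'a \<Rightarrow> real^'a" where "pr s = (\<chi> i. if i \<in> Iz then 0 else s$i)" for s
  have prV: "\<forall>i\<in>Iz. pr s $ i = 0" for s unfolding pr_def by simp
  have pradd: "pr (a + b) = pr a + pr b" for a b unfolding pr_def by (simp add: vec_eq_iff)
  have prmul: "pr (c *\<^sub>R a) = c *\<^sub>R pr a" for c a unfolding pr_def by (simp add: vec_eq_iff)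
  have pr0: "pr 0 = 0" unfolding pr_def by (simp add: vec_eq_iff)
  have prid: "pr s = s" if "\<forall>i\<in>Iz. s$i = 0" for s using that unfolding pr_def by (simp add: vec_eq_iff)
  define p where "p s = pc Iz h x (pr s)" for s
  have "\<exists>v. (\<forall>s. v \<bullet> s \<le> p s) \<and> p s0 \<le> v \<bullet> s0"
  proof (rule HB)
    show "p (a + b) \<le> p a + p b" for a b unfolding p_def pradd by (rule pc_subadd[OF h prV prV])
    show "p (c *\<^sub>R a) \<le> c * p a" if "c > 0" for c a unfolding p_def prmul by (rule pc_hom[OF h prV that])
    have "\<bar>pc Iz h x 0\<bar> \<le> L * norm (0::real^'a)" by (rule clarke_fin(2)[OF h]) simp
    thus "p 0 = 0" unfolding p_def pr0 by simp
  qed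
  then obtain v where v: "\<forall>s. v \<bullet> s \<le> p s" "p s0 \<le> v \<bullet> s0" by blast
  have inn: "pr v \<bullet> s = v \<bullet> s" if "\<forall>i\<in>Iz. s$i = 0" for s
    unfolding inner_vec_def pr_def using that by (intro sum.cong) auto
  have "pr v \<in> clarke_subdiff_c Iz h x"
    unfolding clarke_subdiff_c_def
  proof (intro CollectI conjI allI impI)
    show "\<forall>i\<in>Iz. pr v $ i = 0" by (rule prV)
    fix s :: "real^'a" assume s: "\<forall>i\<in>Iz. s $ i = 0"
    have "s \<bullet> pr v = v \<bullet> s" using inn[OF s] by (simp add: inner_commute)
    also have "\<dots> \<le> p s" using v(1) by blast
    also have "\<dots> = pc Iz h x s" unfolding p_def prid[OF s] ..
    finally show "ereal (s \<bullet> pr v) \<le> clarke_c Iz h x s" using clarke_fin(1)[OF h s] by simp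
  qed
  hence "pr v \<bullet> s0 < 0" using sd by blast
  hence "v \<bullet> s0 < 0" using inn[OF s0] by simp
  with v(2) show ?thesis unfolding p_def prid[OF s0] by simp
qed

lemma fin_rad:
  fixes Q :: "'i \<Rightarrow> real \<Rightarrow> bool"
  assumes "finite I" "\<forall>i\<in>I. \<exists>r>0. Q i r"
    and mono: "\<And>i r r'. Q i r \<Longrightarrow> 0 < r' \<Longrightarrow> r' \<le> r \<Longrightarrow> Q i r'"
  shows "\<exists>r>0. \<forall>i\<in>I. Q i r"
proof -
  from assms(2) obtain R where R: "\<forall>i\<in>I. R i > 0 \<and> Q i (R i)" by metis
  define r where "r = Min (insert 1 (R ` I))"
  have fin: "finite (insert 1 (R ` I))" using assms(1) by simp
  have "r > 0" unfolding r_def using fin R by (subst Min_gr_iff) auto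
  moreover have "\<forall>i\<in>I. Q i r"
  proof
    fix i assume i: "i \<in> I"
    have "r \<le> R i" unfolding r_def using fin i by (intro Min_le) auto
    thus "Q i r" using mono[of i "R i" r] R i \<open>r > 0\<close> by blast
  qed
  ultimately show ?thesis by blast
qed

lemma zslice:
  assumes "x \<in> Zset Iz" "xb \<in> Zset Iz" "dist x xb < 1"
  shows "x \<in> sl Iz xb"
  unfolding sl_def
proof (intro CollectI ballI)
  fix i assume i: "i \<in> Iz"
  have "\<bar>(x - xb)$i\<bar> \<le> norm (x - xb)" by (rule component_le_norm_cart)
  hence "\<bar>x$i - xb$i\<bar> < 1" using assms(3) by (simp add: dist_norm)
  moreover have "x$i - xb$i \<in> \<int>" using assms(1,2) i unfolding Zset_def by auto
  ultimately have "x$i - xb$i = 0" by (intro Ints_nonzero_abs_less1)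
  thus "x$i = xb$i" by simp
qed

lemma sl_refl: "x \<in> sl Iz x" unfolding sl_def by simp
lemma sl_eq: "x \<in> sl Iz xb \<Longrightarrow> sl Iz x = sl Iz xb" unfolding sl_def by auto
lemma sl_add: "y \<in> sl Iz xb \<Longrightarrow> \<forall>i\<in>Iz. s$i = 0 \<Longrightarrow> y + t *\<^sub>R s \<in> sl Iz xb" unfolding sl_def by auto

lemma lipD: "lipschitz_c Iz L h \<Longrightarrow> x \<in> sl Iz y \<Longrightarrow> \<bar>h x - h y\<bar> \<le> L * dist x y"
  unfolding lipschitz_c_def sl_def dist_norm by blast

lemma viol_lip:
  assumes g: "\<forall>i<m. lipschitz_c Iz L (g i)" and xy: "x \<in> sl Iz y"
  shows "\<bar>viol m g x - viol m g y\<bar> \<le> m * L * dist x y"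
proof -
  have "\<bar>viol m g x - viol m g y\<bar> = \<bar>\<Sum>i<m. max 0 (g i x) - max 0 (g i y)\<bar>"
    unfolding viol_def by (simp add: sum_subtractf)
  also have "\<dots> \<le> (\<Sum>i<m. \<bar>max 0 (g i x) - max 0 (g i y)\<bar>)" by (rule sum_abs)
  also have "\<dots> \<le> (\<Sum>i<m. L * dist x y)"
  proof (rule sum_mono)
    fix i assume "i \<in> {..<m}"
    hence "\<bar>g i x - g i y\<bar> \<le> L * dist x y" using lipD g xy by blast
    thus "\<bar>max 0 (g i x) - max 0 (g i y)\<bar> \<le> L * dist x y" by linarith
  qed
  also have "\<dots> = m * L * dist x y" by simp
  finally show ?thesis .
qed

lemma K_compact: "compact (boxX l u \<inter> Zset Iz)"
proof -
  have "boxX l u = cbox l u" unfolding boxX_def by (auto simp: mem_box_cart)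
  moreover have "closed (Zset Iz)"
  proof -
    have "Zset Iz = (\<Inter>i\<in>Iz. (\<lambda>x. x$i) -` \<int>)" unfolding Zset_def by auto
    moreover have "closed ((\<lambda>x::real^'a. x$i) -` \<int>)" for i
      by (rule continuous_closed_vimage) (auto intro: continuous_intros)
    ultimately show ?thesis by auto
  qed
  ultimately show ?thesis by (simp add: compact_Int_closed)
qed



lemma lin_aux: "\<bar>a - b\<bar> \<le> (M::real) \<Longrightarrow> \<bar>c - e\<bar> \<le> M \<Longrightarrow> M \<le> (b - e) / 4 \<Longrightarrow> (b - e) / 2 \<le> a - c"
  by (simp add: abs_le_iff)

lemma loc_ii:
  fixes Iz :: "'n::finite set" and l u :: "real^'n" and f :: "real^'n \<Rightarrow> real"
    and g :: "nat \<Rightarrow> real^'n \<Rightarrow> real" and m :: nat and L :: real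
  assumes L_pos: "L > 0"
    and f_lip: "lipschitz_c Iz L f"
    and g_lip: "\<forall>i<m. lipschitz_c Iz L (g i)"
    and xb: "xb \<in> boxX l u \<inter> Zset Iz"
    and d: "d \<in> Dz Iz l u xb" and dv: "viol m g (xb + d) < viol m g xb"
  shows "\<exists>\<rho>>0. \<exists>e0>0. \<forall>x\<in>(boxX l u \<inter> Zset Iz) - feasF m g. dist x xb < \<rho> \<longrightarrow>
          (\<forall>\<epsilon>. 0 < \<epsilon> \<and> \<epsilon> \<le> e0 \<longrightarrow> \<not> clarke_stationary Iz l u (penalty f m g \<epsilon>) x)"
proof -
  define \<eta> where "\<eta> = viol m g xb - viol m g (xb + d)"
  define C where "C = \<bar>f (xb + d) - f xb\<bar>"
  define \<rho> where "\<rho> = min (1/2) (\<eta> / (4 * (m * L + 1)))"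
  define e0 where "e0 = \<eta> / (2 * (C + L + 1))"
  have \<eta>: "\<eta> > 0" using dv unfolding \<eta>_def by simp
  have mL: "m * L \<ge> 0" using L_pos by simp
  have C0: "C \<ge> 0" unfolding C_def by simp
  have \<rho>: "\<rho> > 0" unfolding \<rho>_def using \<eta> mL by (simp add: add_nonneg_pos)
  have e0: "e0 > 0" unfolding e0_def using \<eta> C0 L_pos by simp
  from d have dI: "\<forall>i. i \<notin> Iz \<longrightarrow> d$i = 0" and dP: "primitive_on Iz d" and dInt: "\<forall>i. d$i \<in> \<int>"
    and xbd: "xb + d \<in> boxX l u \<inter> Zset Iz" unfolding Dz_def by auto
  show ?thesis
  proof (intro exI conjI ballI impI allI notI)
    show "\<rho> > 0" "e0 > 0" by (fact \<rho>, fact e0)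
    fix x \<epsilon> assume xK: "x \<in> (boxX l u \<inter> Zset Iz) - feasF m g" and dx: "dist x xb < \<rho>"
      and \<epsilon>: "0 < \<epsilon> \<and> \<epsilon> \<le> e0" and st: "clarke_stationary Iz l u (penalty f m g \<epsilon>) x"
    have xs: "x \<in> sl Iz xb" using zslice[of x Iz xb] xK xb dx unfolding \<rho>_def by auto
    have comp: "(x + d)$i = (xb + d)$i" if "i \<in> Iz" for i using xs that unfolding sl_def by simp
    have comp2: "(x + d)$i = x$i" if "i \<notin> Iz" for i using dI that by simp
    have "x + d \<in> boxX l u \<inter> Zset Iz"
    proof -
      have "l$i \<le> (x + d)$i \<and> (x + d)$i \<le> u$i" for i
      proof (cases "i \<in> Iz")
        case True thus ?thesis using comp[OF True] xbd unfolding boxX_def by auto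
      next
        case False thus ?thesis using comp2[OF False] xK unfolding boxX_def by auto
      qed
      moreover have "(x + d)$i \<in> \<int>" if "i \<in> Iz" for i
        using comp[OF that] xbd that unfolding Zset_def by auto
      ultimately show ?thesis unfolding boxX_def Zset_def by auto
    qed
    hence "d \<in> Dz Iz l u x" using dI dP dInt unfolding Dz_def by auto
    hence "x + d \<in> Bz Iz l u x" unfolding Bz_def by blast
    hence Pin: "penalty f m g \<epsilon> x \<le> penalty f m g \<epsilon> (x + d)"
      using st unfolding clarke_stationary_def by blast
    have dd: "dist x xb \<le> \<eta> / (4 * (m * L + 1))" using dx unfolding \<rho>_def by simp
    have mLd: "m * L * dist x xb \<le> \<eta> / 4"
    proof -
      have "m * L * dist x xb \<le> (m * L + 1) * (\<eta> / (4 * (m * L + 1)))"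
        using dd mL by (intro mult_mono) auto
      also have "\<dots> = \<eta> / 4" using mL by (simp add: field_simps)
      finally show ?thesis .
    qed
    have v1: "\<bar>viol m g x - viol m g xb\<bar> \<le> m * L * dist x xb" by (rule viol_lip[OF g_lip xs])
    have xds: "x + d \<in> sl Iz (xb + d)" using comp unfolding sl_def by simp
    have "\<bar>viol m g (x + d) - viol m g (xb + d)\<bar> \<le> m * L * dist (x + d) (xb + d)"
      by (rule viol_lip[OF g_lip xds])
    hence v2: "\<bar>viol m g (x + d) - viol m g (xb + d)\<bar> \<le> m * L * dist x xb" by (simp add: dist_norm)
    have ld: "L * dist x xb \<le> L / 2" using dx L_pos unfolding \<rho>_def by simp
    have f1: "\<bar>f x - f xb\<bar> \<le> L * dist x xb" by (rule lipD[OF f_lip xs])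
    have "\<bar>f (x + d) - f (xb + d)\<bar> \<le> L * dist (x + d) (xb + d)" by (rule lipD[OF f_lip xds])
    hence f2: "\<bar>f (x + d) - f (xb + d)\<bar> \<le> L * dist x xb" by (simp add: dist_norm)
    have Dle: "f (x + d) - f x \<le> C + L" using f1 f2 ld unfolding C_def by linarith
    have vge: "viol m g x - viol m g (x + d) \<ge> \<eta> / 2" using lin_aux[OF v1 v2 mLd[unfolded \<eta>_def]] unfolding \<eta>_def .
    from Pin have "(1/\<epsilon>) * (viol m g x - viol m g (x + d)) \<le> f (x + d) - f x"
      unfolding penalty_def by (simp add: algebra_simps)
    hence "viol m g x - viol m g (x + d) \<le> \<epsilon> * (f (x + d) - f x)"
      using \<epsilon> by (simp add: field_simps)
    also have "\<dots> \<le> \<epsilon> * (C + L)" using Dle \<epsilon> by (intro mult_left_mono) auto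
    also have "\<dots> \<le> e0 * (C + L)" using \<epsilon> C0 L_pos by (intro mult_right_mono) auto
    also have "\<dots> < e0 * (C + L + 1)" using e0 by simp
    also have "\<dots> = \<eta> / 2" unfolding e0_def using C0 L_pos by (simp add: field_simps)
    finally show False using vge by simp
  qed
qed

lemma loc_int:
  assumes xb: "xb \<in> interior (feasF m g)"
  shows "\<exists>\<rho>>0. \<exists>e0>0. \<forall>x\<in>(boxX l u \<inter> Zset Iz) - feasF m g. dist x xb < \<rho> \<longrightarrow>
          (\<forall>\<epsilon>. 0 < \<epsilon> \<and> \<epsilon> \<le> e0 \<longrightarrow> \<not> clarke_stationary Iz l u (penalty f m g \<epsilon>) x)"
proof -
  from xb obtain r where r: "r > 0" "ball xb r \<subseteq> feasF m g" unfolding mem_interior by blast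
  show ?thesis
    using r by (intro exI[of _ r] conjI exI[of _ 1]) (auto simp: dist_commute subset_iff)
qed



lemma loc_i:
  fixes Iz :: "'n::finite set" and l u :: "real^'n" and f :: "real^'n \<Rightarrow> real"
    and g :: "nat \<Rightarrow> real^'n \<Rightarrow> real" and m :: nat and L :: real
  assumes L_pos: "L > 0"
    and f_lip: "lipschitz_c Iz L f"
    and g_lip: "\<forall>i<m. lipschitz_c Iz L (g i)"
    and xb: "xb \<in> boxX l u \<inter> Zset Iz"
    and sD: "s \<in> Dc Iz l u xb"
    and sg: "\<forall>i<m. 0 \<le> g i xb \<longrightarrow> (\<forall>\<xi>\<in>clarke_subdiff_c Iz (g i) xb. \<xi> \<bullet> s < 0)"
  shows "\<exists>\<rho>>0. \<exists>e0>0. \<forall>x\<in>(boxX l u \<inter> Zset Iz) - feasF m g. dist x xb < \<rho> \<longrightarrow>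
          (\<forall>\<epsilon>. 0 < \<epsilon> \<and> \<epsilon> \<le> e0 \<longrightarrow> \<not> clarke_stationary Iz l u (penalty f m g \<epsilon>) x)"
proof -
  have sV: "\<forall>i\<in>Iz. s$i = 0" using sD unfolding Dc_def by simp
  define A where "A = {i. i < m \<and> 0 \<le> g i xb}"
  have finA: "finite A" unfolding A_def by simp
  have pcA: "pc Iz (g i) xb s < 0" if "i \<in> A" for i
    using that emfcq_neg[of Iz L "g i" s xb] g_lip sV sg unfolding A_def by auto
  define \<delta> where "\<delta> = Min (insert 1 ((\<lambda>i. - pc Iz (g i) xb s / 2) ` A))"
  have finI: "finite (insert 1 ((\<lambda>i. - pc Iz (g i) xb s / 2) ` A))" using finA by simp
  have \<delta>: "\<delta> > 0" unfolding \<delta>_def using finI pcA by (subst Min_gr_iff) auto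
  have \<delta>A: "pc Iz (g i) xb s < - \<delta>" if "i \<in> A" for i
  proof -
    have "\<delta> \<le> - pc Iz (g i) xb s / 2" unfolding \<delta>_def using finI that by (intro Min_le) auto
    thus ?thesis using \<delta> by simp
  qed
  define Q where "Q i R \<longleftrightarrow>
     (i \<in> A \<longrightarrow> (\<forall>y t. y \<in> sl Iz xb \<and> dist y xb < R \<and> 0 < t \<and> t < R \<longrightarrow>
          (g i (y + t *\<^sub>R s) - g i y) / t < - \<delta>)) \<and>
     (i \<notin> A \<longrightarrow> (\<forall>y\<in>sl Iz xb. dist y xb < R \<longrightarrow> g i y < 0))" for i R
  have "\<exists>R>0. \<forall>i\<in>{..<m}. Q i R"
  proof (rule fin_rad)
    show "\<forall>i\<in>{..<m}. \<exists>r>0. Q i r"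
    proof
      fix i assume i: "i \<in> {..<m}"
      show "\<exists>r>0. Q i r"
      proof (cases "i \<in> A")
        case True
        have "clarke_c Iz (g i) xb s < ereal (- \<delta>)"
          using clarke_fin(1)[of Iz L "g i" s xb] g_lip i sV \<delta>A[OF True] by simp
        from clarke_U[OF this] show ?thesis unfolding Q_def using True by blast
      next
        case False
        hence gn: "g i xb < 0" using i unfolding A_def by auto
        have "\<forall>y\<in>sl Iz xb. dist y xb < - g i xb / L \<longrightarrow> g i y < 0"
        proof (intro ballI impI)
          fix y assume y: "y \<in> sl Iz xb" "dist y xb < - g i xb / L"
          have "\<bar>g i y - g i xb\<bar> \<le> L * dist y xb" using lipD g_lip i y(1) by blast
          moreover have "L * dist y xb < L * (- g i xb / L)" using y(2) L_pos by (intro mult_strict_left_mono) auto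
          hence "L * dist y xb < - g i xb" using L_pos by simp
          ultimately show "g i y < 0" by linarith
        qed
        thus ?thesis unfolding Q_def using False gn L_pos by (intro exI[of _ "- g i xb / L"]) (auto simp: divide_neg_pos)
      qed
    qed
    show "Q i r'" if "Q i r" "0 < r'" "r' \<le> r" for i r r'
      using that unfolding Q_def by (meson less_le_trans)
  qed simp
  then obtain R1 where R1: "R1 > 0" "\<forall>i<m. Q i R1" by auto
  define Q2 where "Q2 j R \<longleftrightarrow> (\<forall>x::real^'n. dist x xb < R \<longrightarrow>
      (x$j = l$j \<longrightarrow> xb$j = l$j) \<and> (x$j = u$j \<longrightarrow> xb$j = u$j))" for j R
  have "\<exists>R>0. \<forall>j\<in>UNIV. Q2 j R"
  proof (rule fin_rad)
    show "\<forall>j\<in>UNIV. \<exists>r>0. Q2 j r"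
    proof
      fix j :: 'n
      define r where "r = min (if xb$j = l$j then 1 else \<bar>xb$j - l$j\<bar>) (if xb$j = u$j then 1 else \<bar>xb$j - u$j\<bar>)"
      have r: "r > 0" unfolding r_def by auto
      have "Q2 j r" unfolding Q2_def
      proof (intro allI impI conjI)
        fix x :: "real^'n" assume dx: "dist x xb < r"
        have "\<bar>(x - xb)$j\<bar> \<le> norm (x - xb)" by (rule component_le_norm_cart)
        hence c: "\<bar>x$j - xb$j\<bar> < r" using dx by (simp add: dist_norm)
        show "x$j = l$j \<Longrightarrow> xb$j = l$j" using c unfolding r_def by (auto split: if_splits)
        show "x$j = u$j \<Longrightarrow> xb$j = u$j" using c unfolding r_def by (auto split: if_splits)
      qed
      thus "\<exists>r>0. Q2 j r" using r by blast
    qed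
    show "Q2 i r'" if "Q2 i r" "0 < r'" "r' \<le> r" for i r r'
      using that unfolding Q2_def by (meson less_le_trans)
  qed simp
  then obtain R2 where R2: "R2 > 0" "\<forall>j. Q2 j R2" by auto
  define \<rho> where "\<rho> = min (1/2) (min (R1/2) R2)"
  define e0 where "e0 = \<delta> / (L * norm s + 1)"
  have \<rho>: "\<rho> > 0" unfolding \<rho>_def using R1 R2 by simp
  have Ls: "L * norm s \<ge> 0" using L_pos by simp
  have e0: "e0 > 0" unfolding e0_def using \<delta> Ls by simp
  show ?thesis
  proof (intro exI conjI ballI impI allI notI)
    show "\<rho> > 0" "e0 > 0" by (fact \<rho>, fact e0)
    fix x \<epsilon> assume xK: "x \<in> (boxX l u \<inter> Zset Iz) - feasF m g" and dx: "dist x xb < \<rho>"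
      and \<epsilon>: "0 < \<epsilon> \<and> \<epsilon> \<le> e0" and st: "clarke_stationary Iz l u (penalty f m g \<epsilon>) x"
    have xs: "x \<in> sl Iz xb" using zslice[of x Iz xb] xK xb dx unfolding \<rho>_def by auto
    have slx: "sl Iz x = sl Iz xb" by (rule sl_eq[OF xs])
    have "s \<in> Dc Iz l u x"
      using sD R2(2) dx unfolding Dc_def Q2_def \<rho>_def by auto
    hence cge: "clarke_c Iz (penalty f m g \<epsilon>) x s \<ge> 0" using st unfolding clarke_stationary_def by blast
    from xK obtain j where j: "j < m" "g j x > 0" unfolding feasF_def by auto
    have dxR1: "dist x xb < R1" "dist x xb \<le> R1 / 2" using dx R1 unfolding \<rho>_def by auto
    have jA: "j \<in> A"
    proof (rule ccontr)
      assume "j \<notin> A"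
      hence "g j x < 0" using R1(2) j(1) xs dxR1 unfolding Q_def by blast
      with j show False by simp
    qed
    define \<gamma> where "\<gamma> = g j x / L"
    have \<gamma>: "\<gamma> > 0" unfolding \<gamma>_def using j L_pos by simp
    define M where "M = min (R1/2) \<gamma>"
    have M: "M > 0" unfolding M_def using R1 \<gamma> by simp
    define r' where "r' = M / (1 + norm s)"
    have ns: "1 + norm s > 0" by (simp add: add_pos_nonneg)
    have r': "r' > 0" unfolding r'_def using M ns by simp
    have r'M: "r' * (1 + norm s) = M" unfolding r'_def using ns by simp
    have "r' \<le> r' * (1 + norm s)" using r' by simp
    hence r'le: "r' \<le> M" using r'M by simp
    have "clarke_c Iz (penalty f m g \<epsilon>) x s \<le> ereal (L * norm s - \<delta> / \<epsilon>)"
    proof (rule clarke_L[OF r'], intro allI impI, elim conjE)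
      fix y t assume y: "y \<in> sl Iz x" "dist y x < r'" "0 < t" "t < r'"
      have ysl: "y \<in> sl Iz xb" using y(1) slx by simp
      have ytsl: "y + t *\<^sub>R s \<in> sl Iz xb" using sl_add[OF ysl sV] .
      have ts: "t * norm s \<le> r' * norm s" using y by (intro mult_right_mono) auto
      have dts: "dist (y + t *\<^sub>R s) y = t * norm s" using y(3) by (simp add: dist_norm)
      have "dist y xb \<le> dist y x + dist x xb" by (rule dist_triangle)
      hence dyb: "dist y xb < r' + R1/2" using y(2) dxR1 by linarith
      have Mr: "M \<le> R1/2" "M \<le> \<gamma>" unfolding M_def by auto
      have r'1: "r' + r' * norm s \<le> R1/2" using r'M Mr by (simp add: algebra_simps)
      have "r' * norm s \<ge> 0" using r' by simp
      hence ydist: "dist y xb < R1" using dyb r'1 by linarith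
      have tR: "t < R1" using y(4) r'le Mr R1 by linarith
      have "dist (y + t *\<^sub>R s) xb \<le> dist (y + t *\<^sub>R s) y + dist y xb" by (rule dist_triangle)
      hence ytdist: "dist (y + t *\<^sub>R s) xb < R1" using dts dyb ts r'1 by linarith
      have "dist (y + t *\<^sub>R s) x \<le> dist (y + t *\<^sub>R s) y + dist y x" by (rule dist_triangle)
      hence "dist (y + t *\<^sub>R s) x < r' + r' * norm s" using dts ts y(2) by linarith
      hence djx: "dist (y + t *\<^sub>R s) x < \<gamma>" using r'M Mr by (simp add: algebra_simps)
      have ytx: "y + t *\<^sub>R s \<in> sl Iz x" using ytsl slx by simp
      have "\<bar>g j (y + t *\<^sub>R s) - g j x\<bar> \<le> L * dist (y + t *\<^sub>R s) x" using lipD g_lip j(1) ytx by blast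
      moreover have "L * dist (y + t *\<^sub>R s) x < g j x" using djx L_pos unfolding \<gamma>_def
        by (simp add: less_divide_eq mult.commute)
      ultimately have gjpos: "g j (y + t *\<^sub>R s) > 0" by linarith
      define T where "T i = max 0 (g i (y + t *\<^sub>R s)) - max 0 (g i y)" for i
      have decA: "g i (y + t *\<^sub>R s) - g i y < - \<delta> * t" if "i \<in> A" for i
      proof -
        have "i < m" using that unfolding A_def by simp
        hence "(g i (y + t *\<^sub>R s) - g i y) / t < - \<delta>"
          using R1(2) that ysl ydist y(3) tR unfolding Q_def by blast
        thus ?thesis using y(3) by (simp add: divide_less_eq)
      qed
      have Tle: "T i \<le> 0" if "i < m" for i
      proof (cases "i \<in> A")
        case True
        have "\<delta> * t > 0" using \<delta> y(3) by simp
        hence "g i (y + t *\<^sub>R s) < g i y" using decA[OF True] by simp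
        thus ?thesis unfolding T_def by (auto simp: max_def)
      next
        case False
        hence "g i y < 0" "g i (y + t *\<^sub>R s) < 0"
          using R1(2) that ysl ytsl ydist ytdist unfolding Q_def by blast+
        thus ?thesis unfolding T_def by simp
      qed
      have Tj: "T j \<le> - \<delta> * t" using decA[OF jA] gjpos unfolding T_def by linarith
      have "viol m g (y + t *\<^sub>R s) - viol m g y = (\<Sum>i<m. T i)"
        unfolding viol_def T_def by (simp add: sum_subtractf)
      also have "\<dots> = T j + (\<Sum>i\<in>{..<m} - {j}. T i)" using j(1) by (subst sum.remove) auto
      also have "\<dots> \<le> T j"
      proof -
        have "(\<Sum>i\<in>{..<m} - {j}. T i) \<le> 0" using Tle by (intro sum_nonpos) auto
        thus ?thesis by simp
      qed
      finally have vd: "viol m g (y + t *\<^sub>R s) - viol m g y \<le> - \<delta> * t" using Tj by linarith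
      have "y + t *\<^sub>R s \<in> sl Iz y" using sl_add[OF sl_refl sV] .
      hence "\<bar>f (y + t *\<^sub>R s) - f y\<bar> \<le> L * (t * norm s)" using lipD[OF f_lip] dts by metis
      hence fd: "f (y + t *\<^sub>R s) - f y \<le> t * (L * norm s)" by (simp add: algebra_simps)
      have "(1/\<epsilon>) * (viol m g (y + t *\<^sub>R s) - viol m g y) \<le> (1/\<epsilon>) * (- \<delta> * t)"
        using vd \<epsilon> by (intro mult_left_mono) auto
      hence "penalty f m g \<epsilon> (y + t *\<^sub>R s) - penalty f m g \<epsilon> y \<le> t * (L * norm s) + (1/\<epsilon>) * (- \<delta> * t)"
        using fd unfolding penalty_def by (simp add: algebra_simps)
      also have "\<dots> = t * (L * norm s - \<delta> / \<epsilon>)" by (simp add: algebra_simps)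
      finally show "(penalty f m g \<epsilon> (y + t *\<^sub>R s) - penalty f m g \<epsilon> y) / t \<le> L * norm s - \<delta> / \<epsilon>"
        using y(3) by (simp add: divide_le_eq mult.commute)
    qed
    with cge have neg: "0 \<le> L * norm s - \<delta> / \<epsilon>" by (metis ereal_less_eq(3) order.trans zero_ereal_def)
    have "\<delta> / e0 \<le> \<delta> / \<epsilon>" using \<epsilon> \<delta> by (intro divide_left_mono) auto
    moreover have "\<delta> / e0 = L * norm s + 1" unfolding e0_def using \<delta> Ls by simp
    ultimately show False using neg by linarith
  qed
qed



theorem mainTheorem6:
  fixes Iz :: "'n::finite set"
    and l u :: "real^'n"
    and f :: "real^'n \<Rightarrow> real"
    and g :: "nat \<Rightarrow> real^'n \<Rightarrow> real"
    and m :: nat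
    and L :: real
  assumes lu: "\<forall>i. l$i < u$i"
    and lu_int: "\<forall>i\<in>Iz. l$i \<in> \<int> \<and> u$i \<in> \<int>"
    and L_pos: "L > 0"
    and f_lip: "lipschitz_c Iz L f"
    and g_lip: "\<forall>i<m. lipschitz_c Iz L (g i)"
    and emfcq: "EMFCQ Iz l u m g"
  shows "\<exists>\<epsilon>s>0. \<forall>\<epsilon>. 0 < \<epsilon> \<and> \<epsilon> \<le> \<epsilon>s \<longrightarrow>
           \<not> (\<exists>x\<in>(boxX l u \<inter> Zset Iz) - feasF m g.
                 clarke_stationary Iz l u (penalty f m g \<epsilon>) x)"
proof -
  define K where "K = boxX l u \<inter> Zset Iz"
  define G where "G xb \<rho> e0 \<longleftrightarrow> (\<forall>x\<in>K - feasF m g. dist x xb < \<rho> \<longrightarrow>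
          (\<forall>\<epsilon>. 0 < \<epsilon> \<and> \<epsilon> \<le> e0 \<longrightarrow> \<not> clarke_stationary Iz l u (penalty f m g \<epsilon>) x))" for xb \<rho> e0
  have loc: "\<forall>xb\<in>K. \<exists>\<rho>. \<rho> > 0 \<and> (\<exists>e0. e0 > 0 \<and> G xb \<rho> e0)"
  proof
    fix xb assume xb: "xb \<in> K"
    have "\<exists>\<rho>>0. \<exists>e0>0. \<forall>x\<in>(boxX l u \<inter> Zset Iz) - feasF m g. dist x xb < \<rho> \<longrightarrow>
          (\<forall>\<epsilon>. 0 < \<epsilon> \<and> \<epsilon> \<le> e0 \<longrightarrow> \<not> clarke_stationary Iz l u (penalty f m g \<epsilon>) x)"
    proof (cases "xb \<in> interior (feasF m g)")
      case True thus ?thesis by (rule loc_int)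
    next
      case False
      hence "xb \<in> (boxX l u \<inter> Zset Iz) - interior (feasF m g)" using xb unfolding K_def by simp
      with emfcq have "(\<exists>s\<in>Dc Iz l u xb. \<forall>i<m. g i xb \<ge> 0 \<longrightarrow>
             (\<forall>\<xi>\<in>clarke_subdiff_c Iz (g i) xb. \<xi> \<bullet> s < 0)) \<or>
        (\<exists>d\<in>Dz Iz l u xb. viol m g (xb + d) < viol m g xb)" unfolding EMFCQ_def by blast
      moreover have xb': "xb \<in> boxX l u \<inter> Zset Iz" using xb unfolding K_def .
      ultimately show ?thesis using loc_i[OF L_pos f_lip g_lip xb'] loc_ii[OF L_pos f_lip g_lip xb'] by blast
    qed
    thus "\<exists>\<rho>. \<rho> > 0 \<and> (\<exists>e0. e0 > 0 \<and> G xb \<rho> e0)" unfolding G_def K_def by blast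
  qed
  from bchoice[OF loc] obtain \<rho> where \<rho>: "\<forall>xb\<in>K. \<rho> xb > 0 \<and> (\<exists>e0. e0 > 0 \<and> G xb (\<rho> xb) e0)" by blast
  hence "\<forall>xb\<in>K. \<exists>e0. e0 > 0 \<and> G xb (\<rho> xb) e0" by blast
  from bchoice[OF this] obtain E where E: "\<forall>xb\<in>K. E xb > 0 \<and> G xb (\<rho> xb) (E xb)" by blast
  have cov: "K \<subseteq> (\<Union>c\<in>K. ball c (\<rho> c))" using \<rho> by force
  obtain C where C: "C \<subseteq> K" "finite C" "K \<subseteq> (\<Union>c\<in>C. ball c (\<rho> c))"
    using compactE_image[OF K_compact[of l u Iz, folded K_def], of K "\<lambda>c. ball c (\<rho> c)"] cov by blast
  define es where "es = Min (insert 1 (E ` C))"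
  have finI: "finite (insert 1 (E ` C))" using C by simp
  have es: "es > 0" unfolding es_def using finI E C by (subst Min_gr_iff) auto
  show ?thesis
  proof (intro exI[of _ es] conjI allI impI notI)
    show "es > 0" by (fact es)
    fix \<epsilon> assume \<epsilon>: "0 < \<epsilon> \<and> \<epsilon> \<le> es"
      and ex: "\<exists>x\<in>(boxX l u \<inter> Zset Iz) - feasF m g. clarke_stationary Iz l u (penalty f m g \<epsilon>) x"
    then obtain x where x: "x \<in> K - feasF m g" "clarke_stationary Iz l u (penalty f m g \<epsilon>) x"
      unfolding K_def by blast
    then obtain c where c: "c \<in> C" "x \<in> ball c (\<rho> c)" using C(3) by blast
    have cK: "c \<in> K" using c C by blast
    have "es \<le> E c" unfolding es_def using finI c by (intro Min_le) auto
    hence "0 < \<epsilon> \<and> \<epsilon> \<le> E c" using \<epsilon> by simp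
    moreover have "dist x c < \<rho> c" using c by (simp add: dist_commute)
    ultimately show False using E cK x unfolding G_def by blast
  qed
qed

end
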